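(* The generating series $F(q;x)=\sum_\gamma q^{\omega_{HU}(\gamma)+\omega_{DH}(\gamma)+\omega_{DU}(\gamma)+\omega_{HH}(\gamma)}x^{|\gamma|}$, where $\gamma$ ranges over all Grand Motzkin paths and $|\gamma|$ is the length, is $$F(q;x)=\frac{1+(1-q)x}{\sqrt{(1+x)\big(1-(1+2q)x-(1-q^2)x^2+(1-q)^2x^3\big)}}.$$
   Context: Steps: $U=(1,1)$, $D=(1,-1)$, $H=(1,0)$. A Grand Motzkin path of length $n$ is any lattice path from $(0,0)$ to $(n,0)$ with steps $U,D,H$. Paths are identified with words of steps, and $\omega_\alpha(\gamma)$ is the number of occurrences of the word $\alpha$ as a factor (contiguous subword, overlapping occurrences counted separately) of $\gamma$. *)

theory Defs
  imports Complex_Main "HOL-Computational_Algebra.Formal_Power_Series"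
begin

datatype step = U | D | H

fun step_height :: "step \<Rightarrow> int" where
  "step_height U = 1" | "step_height D = -1" | "step_height H = 0"

definition grand_motzkin :: "nat \<Rightarrow> step list set" where
  "grand_motzkin n = {\<gamma>. length \<gamma> = n \<and> sum_list (map step_height \<gamma>) = 0}"

definition occ :: "step list \<Rightarrow> step list \<Rightarrow> nat" where
  "occ a g = card {i. i + length a \<le> length g \<and> take (length a) (drop i g) = a}"

definition stat :: "step list \<Rightarrow> nat" where
  "stat g = occ [H,U] g + occ [D,H] g + occ [D,U] g + occ [H,H] g"

definition F :: "real \<Rightarrow> real fps" where
  "F q = Abs_fps (\<lambda>n. \<Sum>g\<in>grand_motzkin n. q ^ stat g)"

end

theory Submission
  imports Defs
begin

unbundle fps_syntax



fun jn :: "step \<Rightarrow> step \<Rightarrow> bool" where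
  "jn a b = ((a = H \<or> a = D) \<and> (b = U \<or> b = H))"

fun st :: "step list \<Rightarrow> nat" where
  "st (a # b # r) = (if jn a b then 1 else 0) + st (b # r)"
| "st _ = 0"

lemma st_Cons: "st (a # g) = (if g \<noteq> [] \<and> jn a (hd g) then 1 else 0) + st g"
  by (cases g) (auto simp del: jn.simps)

lemma st_append: "st (g1 @ g2) = st g1 + st g2 + (if g1 \<noteq> [] \<and> g2 \<noteq> [] \<and> jn (last g1) (hd g2) then 1 else 0)"
proof (induction g1)
  case Nil then show ?case by simp
next
  case (Cons a g1)
  then show ?case
    by (cases g1) (auto simp add: st_Cons simp del: jn.simps)
qed

lemma occ2_Cons: "occ [a,b] (s # g) = (if g \<noteq> [] \<and> s = a \<and> hd g = b then 1 else 0) + occ [a,b] g"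
proof -
  define A where "A = {i. i + length [a,b] \<le> length g \<and> take (length [a,b]) (drop i g) = [a,b]}"
  have fA: "finite A" unfolding A_def by (rule finite_subset[of _ "{..length g}"]) auto
  have eq: "{i. i + length [a,b] \<le> length (s#g) \<and> take (length [a,b]) (drop i (s#g)) = [a,b]}
      = (if g \<noteq> [] \<and> s = a \<and> hd g = b then {0} else {}) \<union> Suc ` A"
  proof (rule set_eqI)
    fix i show "i \<in> {i. i + length [a,b] \<le> length (s#g) \<and> take (length [a,b]) (drop i (s#g)) = [a,b]}
      \<longleftrightarrow> i \<in> (if g \<noteq> [] \<and> s = a \<and> hd g = b then {0} else {}) \<union> Suc ` A"
      unfolding A_def
      by (cases i; cases g) (auto simp: image_iff)
  qed
  have "0 \<notin> Suc ` A" by auto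
  then show ?thesis unfolding occ_def eq using fA
    by (auto simp: card_image A_def)
qed

lemma stat_Cons: "stat (s # g) = (if g \<noteq> [] \<and> jn s (hd g) then 1 else 0) + stat g"
  unfolding stat_def occ2_Cons by (cases s; cases "hd g") auto

lemma stat_st: "stat g = st g"
proof (induction g)
  case Nil then show ?case by (simp add: stat_def occ_def)
next
  case (Cons a g) then show ?case by (simp add: stat_Cons st_Cons del: jn.simps)
qed


definition ht :: "step list \<Rightarrow> int" where "ht g = sum_list (map step_height g)"

lemma ht_simps[simp]: "ht [] = 0" "ht (s # g) = step_height s + ht g" "ht (g1 @ g2) = ht g1 + ht g2"
  by (simp_all add: ht_def)

fun ab :: "int \<Rightarrow> step list \<Rightarrow> bool" where
  "ab c [] = (0 \<le> c)"
| "ab c (s # g) = (0 \<le> c \<and> ab (c + step_height s) g)"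

lemma ab_nonneg: "ab c g \<Longrightarrow> 0 \<le> c" by (cases g) auto

lemma ab_append: "ab c (g1 @ g2) = (ab c g1 \<and> ab (c + ht g1) g2)"
  by (induction g1 arbitrary: c) (auto simp: add.assoc dest: ab_nonneg)

lemma ab_mono: "ab c g \<Longrightarrow> c \<le> c' \<Longrightarrow> ab c' g"
  by (induction g arbitrary: c c') fastforce+

definition Mot :: "step list \<Rightarrow> bool" where "Mot g = (ab 0 g \<and> ht g = 0)"

fun rf :: "step \<Rightarrow> step" where "rf U = D" | "rf D = U" | "rf H = H"

lemma rf_rf[simp]: "rf (rf s) = s" by (cases s) auto
lemma rf_comp[simp]: "rf \<circ> rf = id" by (rule ext) simp
lemma map_rf_rf[simp]: "map rf (map rf g) = g" by (induction g) auto
lemma ht_rf[simp]: "ht (map rf g) = - ht g" by (induction g) (auto, case_tac a, auto)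
lemma map_rf_inj: "map rf a = map rf b \<Longrightarrow> a = b" by (metis map_rf_rf)

definition Neg :: "step list \<Rightarrow> bool" where "Neg g = Mot (map rf g)"

lemma first_ret: "ht g < 0 \<Longrightarrow> \<exists>m r. g = m @ D # r \<and> Mot m"
proof (induction "length g" arbitrary: g rule: less_induct)
  case less
  show ?case
  proof (cases g)
    case Nil then show ?thesis using less by simp
  next
    case (Cons s g')
    show ?thesis
    proof (cases s)
      case D then show ?thesis using Cons by (intro exI[of _ "[]"] exI[of _ g']) (simp add: Mot_def)
    next
      case H
      then have "ht g' < 0" using Cons less by simp
      then obtain m r where "g' = m @ D # r" "Mot m" using less.hyps[of g'] Cons by force
      then show ?thesis using Cons H by (intro exI[of _ "H # m"] exI[of _ r]) (simp add: Mot_def)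
    next
      case U
      then have "ht g' < 0" using Cons less by simp
      then obtain m1 r1 where 1: "g' = m1 @ D # r1" "Mot m1" using less.hyps[of g'] Cons by force
      then have "ht r1 < 0" using Cons less U by (simp add: Mot_def)
      moreover have "length r1 < length g" using 1 Cons by simp
      ultimately obtain m2 r2 where 2: "r1 = m2 @ D # r2" "Mot m2" using less by blast
      have "Mot (U # m1 @ D # m2)" using 1 2 by (auto simp: Mot_def ab_append elim: ab_mono)
      then show ?thesis using 1 2 Cons U by (intro exI[of _ "U # m1 @ D # m2"] exI[of _ r2]) auto
    qed
  qed
qed

lemma ret_unique_gen:
  "ab c m \<Longrightarrow> c + ht m = 0 \<Longrightarrow> ab c m' \<Longrightarrow> c + ht m' = 0 \<Longrightarrow> m @ D # r = m' @ D # r' \<Longrightarrow> m = m'"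
proof (induction m arbitrary: c m')
  case Nil
  then show ?case by (cases m') (auto dest: ab_nonneg)
next
  case (Cons s m1)
  show ?case
  proof (cases m')
    case Nil then show ?thesis using Cons.prems by (auto dest: ab_nonneg)
  next
    case (Cons s' m1')
    then show ?thesis using Cons.prems Cons.IH[of "c + step_height s" m1'] by (auto simp: add.assoc)
  qed
qed

lemma ret_unique: "Mot m \<Longrightarrow> Mot m' \<Longrightarrow> m @ D # r = m' @ D # r' \<Longrightarrow> m = m'"
  unfolding Mot_def using ret_unique_gen[of 0 m m' r r'] by simp

lemma Mot_hd: "Mot g \<Longrightarrow> g \<noteq> [] \<Longrightarrow> hd g \<noteq> D"
  by (cases g) (auto simp: Mot_def dest: ab_nonneg)

lemma Mot_last: "Mot g \<Longrightarrow> g \<noteq> [] \<Longrightarrow> last g \<noteq> U"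
proof
  assume "Mot g" "g \<noteq> []" "last g = U"
  then obtain g' where g: "g = g' @ [U]" by (metis append_butlast_last_id)
  with \<open>Mot g\<close> have "ab 0 g'" "ab (ht g') [U]" "ht g' = -1" by (auto simp: Mot_def ab_append)
  then show False by simp
qed

lemma Neg_hd: "Neg g \<Longrightarrow> g \<noteq> [] \<Longrightarrow> hd g \<noteq> U"
  using Mot_hd[of "map rf g"] unfolding Neg_def by (cases g) auto

lemma Neg_last: "Neg g \<Longrightarrow> g \<noteq> [] \<Longrightarrow> last g \<noteq> D"
  using Mot_last[of "map rf g"] unfolding Neg_def by (auto simp: last_map)

lemma Mot_cases: "Mot g \<longleftrightarrow> g = [] \<or> (\<exists>r. Mot r \<and> g = H # r) \<or> (\<exists>m r. Mot m \<and> Mot r \<and> g = U # m @ D # r)"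
proof
  assume M: "Mot g"
  show "g = [] \<or> (\<exists>r. Mot r \<and> g = H # r) \<or> (\<exists>m r. Mot m \<and> Mot r \<and> g = U # m @ D # r)"
  proof (cases g)
    case (Cons s g')
    show ?thesis
    proof (cases s)
      case U
      with M Cons have "ht g' < 0" by (simp add: Mot_def)
      then obtain m r where "g' = m @ D # r" "Mot m" using first_ret by blast
      with M Cons U show ?thesis by (auto simp: Mot_def ab_append)
    next
      case D with M Cons show ?thesis by (auto simp: Mot_def dest: ab_nonneg)
    next
      case H with M Cons show ?thesis by (auto simp: Mot_def)
    qed
  qed simp
next
  assume "g = [] \<or> (\<exists>r. Mot r \<and> g = H # r) \<or> (\<exists>m r. Mot m \<and> Mot r \<and> g = U # m @ D # r)"
  then show "Mot g" using ab_mono[of 0 _ 1] by (auto simp: Mot_def ab_append)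
qed

lemma map_rf_eq: "map rf g = h \<longleftrightarrow> g = map rf h"
  by (metis map_rf_rf)

lemma Neg_cases: "Neg g \<longleftrightarrow> g = [] \<or> (\<exists>r. Neg r \<and> g = H # r) \<or> (\<exists>m r. Neg m \<and> Neg r \<and> g = D # m @ U # r)"
proof -
  have a: "(\<exists>r. Mot r \<and> map rf g = H # r) \<longleftrightarrow> (\<exists>r. Neg r \<and> g = H # r)"
  proof
    assume "\<exists>r. Mot r \<and> map rf g = H # r"
    then obtain r where "Mot r" "map rf g = H # r" by auto
    then show "\<exists>r. Neg r \<and> g = H # r"
      by (intro exI[of _ "map rf r"]) (simp add: Neg_def map_rf_eq)
  next
    assume "\<exists>r. Neg r \<and> g = H # r"
    then obtain r where "Neg r" "g = H # r" by auto
    then show "\<exists>r. Mot r \<and> map rf g = H # r"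
      by (intro exI[of _ "map rf r"]) (simp add: Neg_def)
  qed
  have b: "(\<exists>m r. Mot m \<and> Mot r \<and> map rf g = U # m @ D # r) \<longleftrightarrow> (\<exists>m r. Neg m \<and> Neg r \<and> g = D # m @ U # r)"
  proof
    assume "\<exists>m r. Mot m \<and> Mot r \<and> map rf g = U # m @ D # r"
    then obtain m r where "Mot m" "Mot r" "map rf g = U # m @ D # r" by auto
    then show "\<exists>m r. Neg m \<and> Neg r \<and> g = D # m @ U # r"
      by (intro exI[of _ "map rf m"] exI[of _ "map rf r"]) (simp add: Neg_def map_rf_eq)
  next
    assume "\<exists>m r. Neg m \<and> Neg r \<and> g = D # m @ U # r"
    then obtain m r where "Neg m" "Neg r" "g = D # m @ U # r" by auto
    then show "\<exists>m r. Mot m \<and> Mot r \<and> map rf g = U # m @ D # r"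
      by (intro exI[of _ "map rf m"] exI[of _ "map rf r"]) (simp add: Neg_def)
  qed
  have "Neg g \<longleftrightarrow> map rf g = [] \<or> (\<exists>r. Mot r \<and> map rf g = H # r) \<or> (\<exists>m r. Mot m \<and> Mot r \<and> map rf g = U # m @ D # r)"
    unfolding Neg_def by (rule Mot_cases)
  then show ?thesis using a b by simp
qed

definition Gr :: "step list \<Rightarrow> bool" where "Gr g = (ht g = 0)"

lemma Gr_cases: "Gr g \<longleftrightarrow> g = [] \<or> (\<exists>r. Gr r \<and> g = H # r) \<or> (\<exists>m r. Mot m \<and> Gr r \<and> g = U # m @ D # r)
   \<or> (\<exists>m r. Neg m \<and> Gr r \<and> g = D # m @ U # r)"
proof
  assume G: "Gr g"
  show "g = [] \<or> (\<exists>r. Gr r \<and> g = H # r) \<or> (\<exists>m r. Mot m \<and> Gr r \<and> g = U # m @ D # r)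
   \<or> (\<exists>m r. Neg m \<and> Gr r \<and> g = D # m @ U # r)"
  proof (cases g)
    case (Cons s g')
    show ?thesis
    proof (cases s)
      case U
      with G Cons have "ht g' < 0" by (simp add: Gr_def)
      then obtain m r where "g' = m @ D # r" "Mot m" using first_ret by blast
      with G Cons U show ?thesis by (auto simp: Gr_def Mot_def)
    next
      case D
      with G Cons have "ht (map rf g') < 0" by (simp add: Gr_def)
      then obtain m r where 1: "map rf g' = m @ D # r" "Mot m" using first_ret by blast
      then have "g' = map rf m @ U # map rf r" by (metis list.simps(9) map_append map_rf_rf rf.simps(1))
      moreover have "Neg (map rf m)" using 1 by (simp add: Neg_def)
      moreover have "Gr (map rf r)" using G Cons D 1 \<open>g' = _\<close> by (auto simp: Gr_def Mot_def)
      ultimately show ?thesis using Cons D by blast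
    next
      case H with G Cons show ?thesis by (auto simp: Gr_def)
    qed
  qed simp
next
  assume "g = [] \<or> (\<exists>r. Gr r \<and> g = H # r) \<or> (\<exists>m r. Mot m \<and> Gr r \<and> g = U # m @ D # r)
   \<or> (\<exists>m r. Neg m \<and> Gr r \<and> g = D # m @ U # r)"
  then show "Gr g" by (auto simp: Gr_def Mot_def Neg_def)
qed





definition gf :: "(step list \<Rightarrow> bool) \<Rightarrow> (step list \<Rightarrow> real) \<Rightarrow> real fps" where
  "gf P f = Abs_fps (\<lambda>n. \<Sum>g\<in>{g. length g = n \<and> P g}. f g)"

lemma UNIV_step: "(UNIV :: step set) = {U, D, H}"
  using step.exhaust by auto

lemma finite_len: "finite {g :: step list. length g = n \<and> P g}"
proof -
  have "finite {g :: step list. set g \<subseteq> UNIV \<and> length g = n}"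
    by (rule finite_lists_length_eq) (simp add: UNIV_step)
  then show ?thesis by (rule finite_subset[rotated]) auto
qed

lemma gf_nth: "gf P f $ n = (\<Sum>g\<in>{g. length g = n \<and> P g}. f g)"
  by (simp add: gf_def)

lemma gf_cong: "(\<And>g. P g \<longleftrightarrow> P' g) \<Longrightarrow> (\<And>g. P g \<Longrightarrow> f g = f' g) \<Longrightarrow> gf P f = gf P' f'"
  unfolding gf_def by (intro arg_cong[where f=Abs_fps] ext sum.cong) auto

lemma gf_split: "gf P f = gf (\<lambda>g. P g \<and> Q g) f + gf (\<lambda>g. P g \<and> \<not> Q g) f"
proof (rule fps_ext)
  fix n
  have "{g. length g = n \<and> P g} = {g. length g = n \<and> P g \<and> Q g} \<union> {g. length g = n \<and> P g \<and> \<not> Q g}"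
    by auto
  then show "gf P f $ n = (gf (\<lambda>g. P g \<and> Q g) f + gf (\<lambda>g. P g \<and> \<not> Q g) f) $ n"
    by (simp add: gf_nth sum.union_disjoint[OF finite_len finite_len] disjoint_iff)
qed

lemma gf_cmult: "gf P (\<lambda>g. c * f g) = fps_const c * gf P f"
  by (rule fps_ext) (simp add: gf_nth sum_distrib_left)

lemma gf_nil: "gf (\<lambda>g. g = []) f = fps_const (f [])"
proof (rule fps_ext)
  fix n show "gf (\<lambda>g. g = []) f $ n = fps_const (f []) $ n"
  proof (cases n)
    case (Suc k)
    show ?thesis unfolding gf_nth using Suc by (simp, intro sum.neutral, auto)
  qed (simp add: gf_nth)
qed

lemma gf_concat:
  assumes inj: "\<And>m r m' r'. PA m \<Longrightarrow> PB r \<Longrightarrow> PA m' \<Longrightarrow> PB r' \<Longrightarrow> pre @ m @ mid @ r = pre @ m' @ mid @ r' \<Longrightarrow> m = m'"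
    and wt: "\<And>m r. PA m \<Longrightarrow> PB r \<Longrightarrow> f (pre @ m @ mid @ r) = fa m * fb r"
  shows "gf (\<lambda>g. \<exists>m r. PA m \<and> PB r \<and> g = pre @ m @ mid @ r) f
       = fps_X ^ (length pre + length mid) * (gf PA fa * gf PB fb)"
proof (rule fps_ext)
  fix n
  define k where "k = length pre + length mid"
  define A where "A i = {g. length g = i \<and> PA g}" for i
  define B where "B i = {g. length g = i \<and> PB g}" for i
  define L where "L = {g. length g = n \<and> (\<exists>m r. PA m \<and> PB r \<and> g = pre @ m @ mid @ r)}"
  have fA: "finite (A i)" for i unfolding A_def by (rule finite_len)
  have fB: "finite (B i)" for i unfolding B_def by (rule finite_len)
  show "gf (\<lambda>g. \<exists>m r. PA m \<and> PB r \<and> g = pre @ m @ mid @ r) f $ n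
       = (fps_X ^ (length pre + length mid) * (gf PA fa * gf PB fb)) $ n"
  proof (cases "n < k")
    case True
    then have "L = {}" unfolding L_def k_def by auto
    then show ?thesis using True unfolding gf_nth L_def[symmetric] by (simp add: fps_X_power_mult_nth k_def)
  next
    case False
    define t where "t = n - k"
    define S where "S = (SIGMA i:{0..t}. A i \<times> B (t - i))"
    define h where "h = (\<lambda>(i::nat, m, r). pre @ m @ mid @ r)"
    have "(fps_X ^ k * (gf PA fa * gf PB fb)) $ n = (\<Sum>i=0..t. (\<Sum>m\<in>A i. fa m) * (\<Sum>r\<in>B (t-i). fb r))"
      using False unfolding fps_X_power_mult_nth by (simp add: fps_mult_nth gf_nth t_def A_def B_def)
    also have "\<dots> = (\<Sum>i=0..t. \<Sum>(m, r)\<in>A i \<times> B (t-i). fa m * fb r)"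
      by (simp add: sum_product sum.cartesian_product)
    also have "\<dots> = (\<Sum>(i, m, r)\<in>S. fa m * fb r)"
      unfolding S_def by (subst sum.Sigma) (auto simp: fA fB finite_cartesian_product)
    also have "\<dots> = (\<Sum>p\<in>S. f (h p))"
      by (rule sum.cong) (auto simp: S_def h_def A_def B_def wt)
    also have "\<dots> = (\<Sum>g\<in>L. f g)"
    proof (rule sum.reindex_bij_betw)
      show "bij_betw h S L"
      proof (rule bij_betwI')
        fix p p' assume "p \<in> S" "p' \<in> S"
        then obtain i m r i' m' r' where p: "p = (i, m, r)" "p' = (i', m', r')"
          and c: "PA m" "PB r" "PA m'" "PB r'" "length m = i" "length m' = i'"
          by (auto simp: S_def A_def B_def)
        show "h p = h p' \<longleftrightarrow> p = p'"
        proof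
          assume "h p = h p'"
          then have e: "pre @ m @ mid @ r = pre @ m' @ mid @ r'" by (simp add: p h_def)
          then have "m = m'" using inj c by blast
          with e c show "p = p'" by (simp add: p)
        qed simp
      next
        fix p assume "p \<in> S"
        then show "h p \<in> L" using False
          by (auto simp: S_def A_def B_def L_def h_def t_def k_def)
      next
        fix g assume "g \<in> L"
        then obtain m r where g: "length g = n" "PA m" "PB r" "g = pre @ m @ mid @ r"
          by (auto simp: L_def)
        show "\<exists>p\<in>S. g = h p"
          using g False
          by (intro bexI[of _ "(length m, m, r)"]) (auto simp: S_def A_def B_def h_def t_def k_def)
      qed
    qed
    finally show ?thesis by (simp add: gf_nth L_def k_def)
  qed
qed





lemma alg_VD:
  fixes q :: real and M VH VD :: "real fps"
  assumes eM: "M = 1 + (fps_X + fps_X^2*M)*(1 + fps_const q*(M-1))"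
    and eVH: "VH = fps_X*(fps_const q + fps_const q*VH + VD)"
    and eVD: "VD = fps_X^2*(fps_const q + fps_const q * VH + VD)*(1 + VH + VD)"
  shows "(fps_const q + fps_const q * VH + VD) * (1 + fps_const (1-q)*fps_X) = fps_const q * M"
proof -
  define x where "x = (fps_X :: real fps)"
  define c where "c = fps_const q"
  define N where "N = 1 + fps_const (1-q)*x"
  define iN where "iN = inverse N"
  have N0: "N $ 0 = 1" by (simp add: N_def x_def)
  have NiN: "N * iN = 1" unfolding iN_def using N0 by (simp add: inverse_mult_eq_1')
  have c1: "fps_const (1-q) = 1 - c" unfolding c_def by (metis fps_const_1_eq_1 fps_const_sub)
  have cN: "N = 1 + x - c*x" by (simp add: N_def c1 algebra_simps)
  have eM': "M = 1 + (x + x^2*M)*(1 + c*(M-1))" using eM by (simp add: x_def c_def)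
  have eVH': "VH = x*(c + c*VH + VD)" using eVH by (simp add: x_def c_def)
  have eVD': "VD = x^2*(c + c*VH + VD)*(1 + VH + VD)" using eVD by (simp add: x_def c_def)
  have A: "(1 - c*x) * VH = x*(c + VD)" using eVH' by (simp add: algebra_simps)
  have B: "(1-c*x)^2 * VD = x^2*(c+VD)*(1 + VD*N)" using eVD' A cN by algebra
  define VS where "VS = c*M*(1-c*x)*iN - c"
  have C: "(1-c*x)^2 * VS = x^2*(c+VS)*(1 + VS*N)" using eM' NiN cN unfolding VS_def by algebra
  have "(VD - VS) * ((1-c*x)^2 - x^2*(1 + N*(c + VD + VS))) = 0" using B C by algebra
  moreover have "(1-c*x)^2 - x^2*(1 + N*(c + VD + VS)) = 1 - x*(2*c - c^2*x + x*(1 + N*(c+VD+VS)))" by algebra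
  then have "((1-c*x)^2 - x^2*(1 + N*(c + VD + VS))) $ 0 \<noteq> 0"
    by (simp add: x_def fps_X_mult_nth)
  then have "(1-c*x)^2 - x^2*(1 + N*(c + VD + VS)) \<noteq> 0" by auto
  ultimately have VDS: "VD = VS" by simp
  have "(1-c*x) * ((c + c*VH + VD) * N) = (1-c*x) * (c*M)"
    using A VDS NiN unfolding VS_def by algebra
  moreover have "(1 - c*x) \<noteq> 0"
  proof
    assume "1 - c*x = 0" then have "(1-c*x) $ 0 = 0" by simp
    then show False by (simp add: x_def)
  qed
  ultimately have "(c + c*VH + VD) * N = c*M" by simp
  then show ?thesis by (simp add: N_def c_def x_def)
qed

lemma alg_F:
  fixes q :: real and M E F G FD :: "real fps"
  assumes eM: "M = 1 + (fps_X + fps_X^2*M)*(1 + fps_const q*(M-1))"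
    and eE: "E * (1 + fps_const (1-q)*fps_X) = fps_const q * M"
    and eG: "G = (fps_X + fps_X^2*M)*(1 + FD + fps_const q*G)"
    and eFD: "FD = fps_X^2*E*F"
    and eF: "F = 1 + G + FD"
  shows "F = (1 + fps_const (1 - q) * fps_X) *
    inverse (fps_radical (\<lambda>k c. root k c) 2
      ((1 + fps_X) * (1 - fps_const (1 + 2*q) * fps_X - fps_const (1 - q^2) * fps_X^2
                      + fps_const ((1 - q)^2) * fps_X^3)))"
proof -
  define x where "x = (fps_X :: real fps)"
  define c where "c = fps_const q"
  have c1: "fps_const (1-q) = 1 - c" unfolding c_def by (metis fps_const_1_eq_1 fps_const_sub)
  have c2: "fps_const (1+2*q) = 1 + 2*c" unfolding c_def
    by (simp add: numeral_fps_const flip: fps_const_add)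
  have c3: "fps_const (1-q^2) = 1 - c^2" unfolding c_def by (metis fps_const_1_eq_1 fps_const_sub fps_const_power)
  have c4: "fps_const ((1-q)^2) = (1 - c)^2" using c1 by (metis fps_const_power)
  define N where "N = 1 + (1-c)*x"
  define P where "P = (1 + x) * (1 - (1 + 2*c) * x - (1 - c^2) * x^2 + (1 - c)^2 * x^3)"
  define s where "s = 1 - c*x - (1-c)*x^2 - 2*c*x^2*M"
  define a where "a = x + x^2*M"
  have eM': "M = 1 + (x + x^2*M)*(1 + c*(M-1))" using eM by (simp add: x_def c_def)
  have eE': "E * N = c*M" using eE by (simp add: N_def c1 x_def c_def)
  have eG': "G = a*(1 + FD + c*G)" using eG by (simp add: a_def x_def c_def)
  have eFD': "FD = x^2*E*F" using eFD by (simp add: x_def)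
  have D1: "F * ((1 - x^2*E)*(1-c*a) - a*x^2*E) = 1 + (1-c)*a"
    using eG' eFD' eF by algebra
  have D2: "N * ((1 - x^2*E)*(1-c*a) - a*x^2*E) = s * (1 + (1-c)*a)"
    using eM' eE' unfolding N_def s_def a_def by algebra
  have "(1 + (1-c)*a) * (F * s) = (1 + (1-c)*a) * N"
    using D1 D2 by algebra
  moreover have "(1 + (1-c)*a) \<noteq> 0"
  proof
    assume "1 + (1-c)*a = 0" then have "(1 + (1-c)*a) $ 0 = 0" by simp
    then show False by (simp add: a_def x_def fps_X_mult_nth power2_eq_square mult.assoc)
  qed
  ultimately have Fs: "F * s = N" by simp
  have s0: "s $ 0 = 1" by (simp add: s_def x_def c_def fps_X_mult_nth power2_eq_square mult.assoc)
  have sP: "s ^ 2 = P" using eM' unfolding s_def P_def by algebra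
  have P0: "P $ 0 = 1" by (simp add: P_def x_def fps_X_mult_nth power2_eq_square power3_eq_cube mult.assoc)
  have "s ^ Suc 1 = P \<longleftrightarrow> s = fps_radical (\<lambda>k c. root k c) (Suc 1) P"
    by (rule radical_unique) (simp_all add: s0 P0)
  with sP have srad: "s = fps_radical (\<lambda>k c. root k c) 2 P" by (simp add: numeral_2_eq_2)
  have "F = N * inverse s" using Fs s0
    by (metis inverse_mult_eq_1' mult.assoc mult.right_neutral zero_neq_one)
  then show ?thesis unfolding srad P_def N_def x_def c1 c2 c3 c4 c_def[symmetric] .
qed





lemma gf_false: "gf (\<lambda>g. False) f = 0"
  by (rule fps_ext) (simp add: gf_nth)

lemma gf_cases:
  assumes P: "\<And>g. P g \<longleftrightarrow> g = [] \<or> C1 g \<or> C2 g \<or> C3 g"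
    and h1: "\<And>g. C1 g \<Longrightarrow> g \<noteq> [] \<and> hd g = H"
    and h2: "\<And>g. C2 g \<Longrightarrow> g \<noteq> [] \<and> hd g = U"
    and h3: "\<And>g. C3 g \<Longrightarrow> g \<noteq> [] \<and> hd g = D"
  shows "gf P f = fps_const (f []) + gf C1 f + gf C2 f + gf C3 f"
proof -
  have "gf P f = gf (\<lambda>g. P g \<and> g = []) f + gf (\<lambda>g. P g \<and> g \<noteq> []) f" by (rule gf_split)
  also have "gf (\<lambda>g. P g \<and> g = []) f = fps_const (f [])"
    using P by (subst gf_cong[where P'="\<lambda>g. g = []" and f'=f]) (auto simp: gf_nil)
  also have "gf (\<lambda>g. P g \<and> g \<noteq> []) f = gf (\<lambda>g. (P g \<and> g \<noteq> []) \<and> hd g = H) f + gf (\<lambda>g. (P g \<and> g \<noteq> []) \<and> hd g \<noteq> H) f"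
    by (rule gf_split)
  also have "gf (\<lambda>g. (P g \<and> g \<noteq> []) \<and> hd g = H) f = gf C1 f"
    using P h1 h2 h3 by (intro gf_cong) (metis step.distinct)+
  also have "gf (\<lambda>g. (P g \<and> g \<noteq> []) \<and> hd g \<noteq> H) f = gf (\<lambda>g. ((P g \<and> g \<noteq> []) \<and> hd g \<noteq> H) \<and> hd g = U) f
       + gf (\<lambda>g. ((P g \<and> g \<noteq> []) \<and> hd g \<noteq> H) \<and> hd g \<noteq> U) f"
    by (rule gf_split)
  also have "gf (\<lambda>g. ((P g \<and> g \<noteq> []) \<and> hd g \<noteq> H) \<and> hd g = U) f = gf C2 f"
    using P h1 h2 h3 by (intro gf_cong) (metis step.distinct)+
  also have "gf (\<lambda>g. ((P g \<and> g \<noteq> []) \<and> hd g \<noteq> H) \<and> hd g \<noteq> U) f = gf C3 f"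
    using P h1 h2 h3 by (intro gf_cong) (metis step.distinct step.exhaust)+
  finally show ?thesis by (simp add: add.assoc)
qed

lemma gf_one_nil: "gf (\<lambda>m. m = []) (\<lambda>_. 1) = 1"
  using gf_nil[of "\<lambda>_. 1"] by simp

lemma gf_cons:
  assumes wt: "\<And>r. PB r \<Longrightarrow> f (s # r) = fb r"
  shows "gf (\<lambda>g. \<exists>r. PB r \<and> g = s # r) f = fps_X * gf PB fb"
proof -
  have "gf (\<lambda>g. \<exists>m r. m = [] \<and> PB r \<and> g = [s] @ m @ [] @ r) f
      = fps_X ^ (length [s] + length ([]::step list)) * (gf (\<lambda>m. m = []) (\<lambda>_. 1) * gf PB fb)"
    by (rule gf_concat[where PA="\<lambda>m. m = []" and PB=PB and pre="[s]" and mid="[]" and fa="\<lambda>_. 1" and fb=fb and f=f]) (auto simp: wt)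
  moreover have "gf (\<lambda>g. \<exists>m r. m = [] \<and> PB r \<and> g = [s] @ m @ [] @ r) f = gf (\<lambda>g. \<exists>r. PB r \<and> g = s # r) f"
    by (rule gf_cong) auto
  ultimately show ?thesis by (simp add: gf_one_nil)
qed

definition wt :: "real \<Rightarrow> step list \<Rightarrow> real" where "wt q g = q ^ st g"
definition vt :: "real \<Rightarrow> step list \<Rightarrow> real" where
  "vt q k = (if k \<noteq> [] \<and> last k = H then q else 1) * wt q k"
definition et :: "real \<Rightarrow> step list \<Rightarrow> real" where
  "et q k = (if k = [] then q else (if hd k = H then q else 1) * (if last k = H then q else 1) * wt q k)"
definition gB :: "real \<Rightarrow> step list \<Rightarrow> real" where
  "gB q r = (if r \<noteq> [] \<and> (hd r = U \<or> hd r = H) then q else 1) * wt q r"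

lemma wt_H: "wt q (H # r) = gB q r"
  by (simp add: wt_def gB_def st_Cons power_add)

lemma wt_U: "wt q (U # m @ D # r) = wt q m * gB q r"
  by (cases "m = []") (auto simp: wt_def gB_def st_Cons st_append power_add hd_append)

lemma wt_D: "Neg m \<Longrightarrow> wt q (D # m @ U # r) = et q m * wt q r"
  using Neg_hd[of m] Neg_last[of m]
  apply (cases "m = []")
  apply (simp add: wt_def et_def st_Cons st_append power_add)
  apply (cases "hd m"; cases "last m")
  apply (auto simp: wt_def et_def st_Cons st_append power_add hd_append)
  done

lemma vt_H: "Neg r \<Longrightarrow> vt q (H # r) = et q r"
  using Neg_hd[of r]
  apply (cases "r = []")
   apply (simp add: vt_def et_def wt_def st_Cons)
  apply (cases "hd r")
    apply (auto simp: vt_def et_def wt_def st_Cons power_add)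
  done

lemma vt_D: "Neg m \<Longrightarrow> vt q (D # m @ U # r) = et q m * vt q r"
  by (cases "r = []") (auto simp: vt_def wt_D)


lemma inj_U: "Mot m \<Longrightarrow> Mot m' \<Longrightarrow> [U] @ m @ [D] @ r = [U] @ m' @ [D] @ r' \<Longrightarrow> m = m'"
  using ret_unique[of m m' r r'] by simp

lemma inj_D: "Neg m \<Longrightarrow> Neg m' \<Longrightarrow> [D] @ m @ [U] @ r = [D] @ m' @ [U] @ r' \<Longrightarrow> m = m'"
proof -
  assume a: "Neg m" "Neg m'" "[D] @ m @ [U] @ r = [D] @ m' @ [U] @ r'"
  then have "m @ U # r = m' @ U # r'" by simp
  then have "map rf (m @ U # r) = map rf (m' @ U # r')" by (rule arg_cong)
  then have "map rf m @ D # map rf r = map rf m' @ D # map rf r'" by simp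
  then have "map rf m = map rf m'" using a ret_unique unfolding Neg_def by blast
  then show "m = m'" by (rule map_rf_inj)
qed

lemma eqs_M:
  shows "gf Mot (wt q) = 1 + fps_X * gf Mot (gB q) + fps_X^2 * (gf Mot (wt q) * gf Mot (gB q))"
    and "gf Mot (gB q) = 1 + fps_const q * (gf Mot (wt q) - 1)"
proof -
  define C1 where "C1 = (\<lambda>g. \<exists>r. Mot r \<and> g = H # r)"
  define C2 where "C2 = (\<lambda>g. \<exists>m r. Mot m \<and> Mot r \<and> g = [U] @ m @ [D] @ r)"
  have cs: "Mot g \<longleftrightarrow> g = [] \<or> C1 g \<or> C2 g \<or> False" for g
    unfolding C1_def C2_def using Mot_cases[of g] by simp
  have h: "\<And>g. C1 g \<Longrightarrow> g \<noteq> [] \<and> hd g = H" "\<And>g. C2 g \<Longrightarrow> g \<noteq> [] \<and> hd g = U"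
    "\<And>g. False \<Longrightarrow> g \<noteq> [] \<and> hd g = D" unfolding C1_def C2_def by auto
  have M: "gf Mot f = fps_const (f []) + gf C1 f + gf C2 f" for f
    using gf_cases[OF cs h, of f] by (simp add: gf_false)
  have 1: "gf C1 (wt q) = fps_X * gf Mot (gB q)"
    unfolding C1_def by (rule gf_cons) (simp add: wt_H)
  have c2: "gf C2 (wt q) = fps_X^(length [U] + length [D]) * (gf Mot (wt q) * gf Mot (gB q))"
    unfolding C2_def by (rule gf_concat[where PA=Mot and PB=Mot and pre="[U]" and mid="[D]" and f="wt q" and fa="wt q" and fb="gB q"]) (blast intro: inj_U, simp add: wt_U)
  then have 2: "gf C2 (wt q) = fps_X^2 * (gf Mot (wt q) * gf Mot (gB q))" by (simp add: numeral_2_eq_2)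
  show "gf Mot (wt q) = 1 + fps_X * gf Mot (gB q) + fps_X^2 * (gf Mot (wt q) * gf Mot (gB q))"
    using M[of "wt q"] 1 2 by (simp add: wt_def)
  have 3: "gf C1 (gB q) = fps_const q * gf C1 (wt q)"
    unfolding gf_cmult[symmetric] by (rule gf_cong) (auto simp: C1_def gB_def)
  have 4: "gf C2 (gB q) = fps_const q * gf C2 (wt q)"
    unfolding gf_cmult[symmetric] by (rule gf_cong) (auto simp: C2_def gB_def)
  show "gf Mot (gB q) = 1 + fps_const q * (gf Mot (wt q) - 1)"
    using M[of "wt q"] M[of "gB q"] 3 4 by (simp add: wt_def gB_def algebra_simps)
qed

lemma eqs_N:
  shows "gf (\<lambda>g. \<exists>r. Neg r \<and> g = H # r) (vt q) = fps_X * (fps_const q + fps_const q * gf (\<lambda>g. \<exists>r. Neg r \<and> g = H # r) (vt q) + gf (\<lambda>g. \<exists>m r. Neg m \<and> Neg r \<and> g = [D] @ m @ [U] @ r) (vt q))"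
    and "gf (\<lambda>g. \<exists>m r. Neg m \<and> Neg r \<and> g = [D] @ m @ [U] @ r) (vt q) = fps_X^2 * (fps_const q + fps_const q * gf (\<lambda>g. \<exists>r. Neg r \<and> g = H # r) (vt q) + gf (\<lambda>g. \<exists>m r. Neg m \<and> Neg r \<and> g = [D] @ m @ [U] @ r) (vt q)) * (1 + gf (\<lambda>g. \<exists>r. Neg r \<and> g = H # r) (vt q) + gf (\<lambda>g. \<exists>m r. Neg m \<and> Neg r \<and> g = [D] @ m @ [U] @ r) (vt q))"
    and "gf Neg (et q) = fps_const q + fps_const q * gf (\<lambda>g. \<exists>r. Neg r \<and> g = H # r) (vt q) + gf (\<lambda>g. \<exists>m r. Neg m \<and> Neg r \<and> g = [D] @ m @ [U] @ r) (vt q)"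
proof -
  define C1 where "C1 = (\<lambda>g. \<exists>r. Neg r \<and> g = H # r)"
  define C3 where "C3 = (\<lambda>g. \<exists>m r. Neg m \<and> Neg r \<and> g = [D] @ m @ [U] @ r)"
  have cs: "Neg g \<longleftrightarrow> g = [] \<or> C1 g \<or> False \<or> C3 g" for g
    unfolding C1_def C3_def using Neg_cases[of g] by simp
  have h: "\<And>g. C1 g \<Longrightarrow> g \<noteq> [] \<and> hd g = H" "\<And>g. False \<Longrightarrow> g \<noteq> [] \<and> hd g = U"
    "\<And>g. C3 g \<Longrightarrow> g \<noteq> [] \<and> hd g = D" unfolding C1_def C3_def by auto
  have N: "gf Neg f = fps_const (f []) + gf C1 f + gf C3 f" for f
    using gf_cases[OF cs h, of f] by (simp add: gf_false)
  have 1: "gf C1 (vt q) = fps_X * gf Neg (et q)"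
    unfolding C1_def by (rule gf_cons) (simp add: vt_H)
  have c2: "gf C3 (vt q) = fps_X^(length [D] + length [U]) * (gf Neg (et q) * gf Neg (vt q))"
    unfolding C3_def by (rule gf_concat[where PA=Neg and PB=Neg and pre="[D]" and mid="[U]" and f="vt q" and fa="et q" and fb="vt q"]) (blast intro: inj_D, simp add: vt_D)
  then have 2: "gf C3 (vt q) = fps_X^2 * (gf Neg (et q) * gf Neg (vt q))" by (simp add: numeral_2_eq_2)
  have 3: "gf C1 (et q) = fps_const q * gf C1 (vt q)"
    unfolding gf_cmult[symmetric] by (rule gf_cong) (auto simp: C1_def et_def vt_def)
  have 4: "gf C3 (et q) = gf C3 (vt q)"
    by (rule gf_cong) (auto simp: C3_def et_def vt_def)
  have E: "gf Neg (et q) = fps_const q + fps_const q * gf C1 (vt q) + gf C3 (vt q)"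
    using N[of "et q"] 3 4 by (simp add: et_def)
  have V: "gf Neg (vt q) = 1 + gf C1 (vt q) + gf C3 (vt q)"
    using N[of "vt q"] by (simp add: vt_def wt_def)
  show "gf Neg (et q) = fps_const q + fps_const q * gf C1 (vt q) + gf C3 (vt q)" by (rule E)
  show "gf C1 (vt q) = fps_X * (fps_const q + fps_const q * gf C1 (vt q) + gf C3 (vt q))"
    using 1 E by simp
  show "gf C3 (vt q) = fps_X^2 * (fps_const q + fps_const q * gf C1 (vt q) + gf C3 (vt q)) * (1 + gf C1 (vt q) + gf C3 (vt q))"
    using 2 E V by (simp add: mult.assoc)
qed

lemma eqs_G:
  shows "gf Gr (wt q) = 1 + (gf (\<lambda>g. \<exists>r. Gr r \<and> g = H # r) (wt q) + gf (\<lambda>g. \<exists>m r. Mot m \<and> Gr r \<and> g = [U] @ m @ [D] @ r) (wt q))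
      + gf (\<lambda>g. \<exists>m r. Neg m \<and> Gr r \<and> g = [D] @ m @ [U] @ r) (wt q)"
    and "gf (\<lambda>g. \<exists>r. Gr r \<and> g = H # r) (wt q) + gf (\<lambda>g. \<exists>m r. Mot m \<and> Gr r \<and> g = [U] @ m @ [D] @ r) (wt q)
      = (fps_X + fps_X^2 * gf Mot (wt q)) * (1 + gf (\<lambda>g. \<exists>m r. Neg m \<and> Gr r \<and> g = [D] @ m @ [U] @ r) (wt q)
         + fps_const q * (gf (\<lambda>g. \<exists>r. Gr r \<and> g = H # r) (wt q) + gf (\<lambda>g. \<exists>m r. Mot m \<and> Gr r \<and> g = [U] @ m @ [D] @ r) (wt q)))"
    and "gf (\<lambda>g. \<exists>m r. Neg m \<and> Gr r \<and> g = [D] @ m @ [U] @ r) (wt q) = fps_X^2 * gf Neg (et q) * gf Gr (wt q)"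
proof -
  define C1 where "C1 = (\<lambda>g. \<exists>r. Gr r \<and> g = H # r)"
  define C2 where "C2 = (\<lambda>g. \<exists>m r. Mot m \<and> Gr r \<and> g = [U] @ m @ [D] @ r)"
  define C3 where "C3 = (\<lambda>g. \<exists>m r. Neg m \<and> Gr r \<and> g = [D] @ m @ [U] @ r)"
  have cs: "Gr g \<longleftrightarrow> g = [] \<or> C1 g \<or> C2 g \<or> C3 g" for g
    unfolding C1_def C2_def C3_def using Gr_cases[of g] by simp
  have h: "\<And>g. C1 g \<Longrightarrow> g \<noteq> [] \<and> hd g = H" "\<And>g. C2 g \<Longrightarrow> g \<noteq> [] \<and> hd g = U"
    "\<And>g. C3 g \<Longrightarrow> g \<noteq> [] \<and> hd g = D" unfolding C1_def C2_def C3_def by auto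
  note G = gf_cases[OF cs h]
  have 1: "gf C1 (wt q) = fps_X * gf Gr (gB q)"
    unfolding C1_def by (rule gf_cons) (simp add: wt_H)
  have c2: "gf C2 (wt q) = fps_X^(length [U] + length [D]) * (gf Mot (wt q) * gf Gr (gB q))"
    unfolding C2_def by (rule gf_concat[where PA=Mot and PB=Gr and pre="[U]" and mid="[D]" and f="wt q" and fa="wt q" and fb="gB q"]) (blast intro: inj_U, simp add: wt_U)
  then have 2: "gf C2 (wt q) = fps_X^2 * (gf Mot (wt q) * gf Gr (gB q))" by (simp add: numeral_2_eq_2)
  have c3: "gf C3 (wt q) = fps_X^(length [D] + length [U]) * (gf Neg (et q) * gf Gr (wt q))"
    unfolding C3_def by (rule gf_concat[where PA=Neg and PB=Gr and pre="[D]" and mid="[U]" and f="wt q" and fa="et q" and fb="wt q"]) (blast intro: inj_D, simp add: wt_D)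
  then have 3: "gf C3 (wt q) = fps_X^2 * (gf Neg (et q) * gf Gr (wt q))" by (simp add: numeral_2_eq_2)
  have 4: "gf C1 (gB q) = fps_const q * gf C1 (wt q)"
    unfolding gf_cmult[symmetric] by (rule gf_cong) (auto simp: C1_def gB_def)
  have 5: "gf C2 (gB q) = fps_const q * gf C2 (wt q)"
    unfolding gf_cmult[symmetric] by (rule gf_cong) (auto simp: C2_def gB_def)
  have 6: "gf C3 (gB q) = gf C3 (wt q)"
    by (rule gf_cong) (auto simp: C3_def gB_def)
  have GB: "gf Gr (gB q) = 1 + gf C3 (wt q) + fps_const q * (gf C1 (wt q) + gf C2 (wt q))"
    using G[of "gB q"] 4 5 6 by (simp add: gB_def wt_def algebra_simps)
  show "gf Gr (wt q) = 1 + (gf C1 (wt q) + gf C2 (wt q)) + gf C3 (wt q)"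
    using G[of "wt q"] by (simp add: wt_def add.assoc)
  show "gf C1 (wt q) + gf C2 (wt q) = (fps_X + fps_X^2 * gf Mot (wt q)) * (1 + gf C3 (wt q) + fps_const q * (gf C1 (wt q) + gf C2 (wt q)))"
  proof -
    have "gf C1 (wt q) + gf C2 (wt q) = (fps_X + fps_X^2 * gf Mot (wt q)) * gf Gr (gB q)"
      unfolding 1 2 by (simp add: distrib_right mult.assoc)
    then show ?thesis unfolding GB .
  qed
  show "gf C3 (wt q) = fps_X^2 * gf Neg (et q) * gf Gr (wt q)"
    using 3 by (simp add: mult.assoc)
qed

lemma F_gf: "F q = gf Gr (wt q)"
  unfolding F_def gf_def grand_motzkin_def Gr_def ht_def wt_def stat_st ..

theorem mainTheorem9:
  fixes q :: real
  shows "F q = (1 + fps_const (1 - q) * fps_X) *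
    inverse (fps_radical (\<lambda>k c. root k c) 2
      ((1 + fps_X) * (1 - fps_const (1 + 2*q) * fps_X - fps_const (1 - q^2) * fps_X^2
                      + fps_const ((1 - q)^2) * fps_X^3)))"
proof -
  note m = eqs_M[of q]
  have eM: "gf Mot (wt q) = 1 + (fps_X + fps_X^2 * gf Mot (wt q)) * (1 + fps_const q * (gf Mot (wt q) - 1))"
    using m by (simp add: algebra_simps)
  note n = eqs_N[of q]
  have eE: "gf Neg (et q) * (1 + fps_const (1-q)*fps_X) = fps_const q * gf Mot (wt q)"
    unfolding n(3) by (rule alg_VD[OF eM n(1) n(2)])
  note g = eqs_G[of q]
  show ?thesis unfolding F_gf by (rule alg_F[OF eM eE g(2) g(3) g(1)])
qed


end
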